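(* Consider a tree power network $(\mathcal{V},\mathcal{E})$, $\mathcal{V}=\{1,\dots,n\}$, with fixed voltage magnitudes $|V_i|=\overline{V}_i>0$ and angle limits satisfying $$-\tan^{-1}\!\Big(\frac{b_{ik}}{g_{ik}}\Big)<\underline{\theta}_{ik}\le\overline{\theta}_{ik}<\tan^{-1}\!\Big(\frac{b_{ik}}{g_{ik}}\Big)\quad\text{for all }(i,k)\in\mathcal{E},$$ with $\underline{\theta}_{ik}\in[-\pi,0]$, $\overline{\theta}_{ik}\in[0,\pi]$. Consider the OPF problem with load vector $\mathbf{p}_D=(P_{D_1},\dots,P_{D_n})$: minimize $\sum_{i\in\mathcal{V}}f_i(P_{G_i})$ subject to $\underline{P}_{G_i}\le P_{G_i}\le\overline{P}_{G_i}$ and $P_{G_i}-P_{D_i}=\sum_{k\sim i}P_{ik}$ for $i\in\mathcal{V}$, and $(P_{ik},P_{ki})\in\mathcal{F}_{\theta_{ik}}$ for $(i,k)\in\mathcal{E}$, where each $f_i$ is monotonically increasing and convex. Let $f^*_{\boldsymbol\epsilon}$ be its optimal value when $\mathbf{p}_D$ is replaced by $\mathbf{p}_D+\boldsymbol\epsilon$, assume $f^*_{\boldsymbol\epsilon}$ is differentiable at $\boldsymbol\epsilon=0$, and let $\lambda_1,\dots,\lambda_n$ be the locational marginal prices, i.e. the numbers such that $\sum_i\lambda_i\epsilon_i$ is the first-order approximation of $f^*_{\boldsymbol\epsilon}-f^*_0$. Then for every $i\in\mathcal{V}$: (1) $\lambda_i$ equals the Lagrange multiplier of the power balance equation $P_{G_i}-P_{D_i}=\sum_{k\sim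 i}P_{ik}$ in the convexified OPF problem (the same problem with each constraint $(P_{ik},P_{ki})\in\mathcal{F}_{\theta_{ik}}$ replaced by $(P_{ik},P_{ki})\in\mathrm{conv}(\mathcal{F}_{\theta_{ik}})$); (2) $\lambda_i\ge0$.
   Context: Each line $(i,k)\in\mathcal{E}$ has admittance $y_{ik}=g_{ik}-jb_{ik}$ with $g_{ik},b_{ik}\ge0$. For $\theta_{ik}=\theta_i-\theta_k$ (difference of bus voltage phases), the line flows are $P_{ik}=\overline{V}_i^2 g_{ik}+\overline{V}_i\overline{V}_k b_{ik}\sin\theta_{ik}-\overline{V}_i\overline{V}_k g_{ik}\cos\theta_{ik}$ and $P_{ki}=\overline{V}_k^2 g_{ik}-\overline{V}_i\overline{V}_k b_{ik}\sin\theta_{ik}-\overline{V}_i\overline{V}_k g_{ik}\cos\theta_{ik}$. $\mathcal{F}_{\theta_{ik}}\subset\mathbb{R}^2$ is the set of pairs $(P_{ik},P_{ki})$ obtained as $\theta_{ik}$ ranges over $[\underline{\theta}_{ik},\overline{\theta}_{ik}]$. $P_{G_i}$ denotes the generation and $P_{D_i}$ the load at bus $i$; $\mathrm{conv}$ denotes convex hull. *)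

theory Defs
  imports "HOL-Analysis.Analysis"
begin

text \<open>Lines are given as a set E of ordered pairs (i,k); each line is listed once
  (no self loops, not both orientations). Neighbourhood and tree structure refer to
  the underlying undirected graph.\<close>

definition adj :: "('v \<times> 'v) set \<Rightarrow> 'v \<Rightarrow> 'v \<Rightarrow> bool" where
  "adj E a b \<longleftrightarrow> (a, b) \<in> E \<or> (b, a) \<in> E"

definition nbrs :: "('v \<times> 'v) set \<Rightarrow> 'v \<Rightarrow> 'v set" where
  "nbrs E i = {k. adj E i k}"

definition simple_edges :: "('v \<times> 'v) set \<Rightarrow> bool" where
  "simple_edges E \<longleftrightarrow> (\<forall>(i, k) \<in> E. i \<noteq> k \<and> (k, i) \<notin> E)"

definition graph_connected :: "('v \<times> 'v) set \<Rightarrow> bool" where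
  "graph_connected E \<longleftrightarrow> (\<forall>a b. (a, b) \<in> {(x, y). adj E x y}\<^sup>*)"

definition has_cycle :: "('v \<times> 'v) set \<Rightarrow> bool" where
  "has_cycle E \<longleftrightarrow> (\<exists>vs. length vs \<ge> 3 \<and> distinct vs \<and>
      (\<forall>j < length vs. adj E (vs ! j) (vs ! ((j + 1) mod length vs))))"

definition is_tree :: "('v \<times> 'v) set \<Rightarrow> bool" where
  "is_tree E \<longleftrightarrow> simple_edges E \<and> graph_connected E \<and> \<not> has_cycle E"

definition P_ik :: "real \<Rightarrow> real \<Rightarrow> real \<Rightarrow> real \<Rightarrow> real \<Rightarrow> real" where
  "P_ik Vi Vk g b \<theta> = Vi\<^sup>2 * g + Vi * Vk * b * sin \<theta> - Vi * Vk * g * cos \<theta>"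

definition P_ki :: "real \<Rightarrow> real \<Rightarrow> real \<Rightarrow> real \<Rightarrow> real \<Rightarrow> real" where
  "P_ki Vi Vk g b \<theta> = Vk\<^sup>2 * g - Vi * Vk * b * sin \<theta> - Vi * Vk * g * cos \<theta>"

definition flow_set ::
  "('v \<Rightarrow> real) \<Rightarrow> ('v \<times> 'v \<Rightarrow> real) \<Rightarrow> ('v \<times> 'v \<Rightarrow> real) \<Rightarrow>
   ('v \<times> 'v \<Rightarrow> real) \<Rightarrow> ('v \<times> 'v \<Rightarrow> real) \<Rightarrow> 'v \<times> 'v \<Rightarrow> (real \<times> real) set" where
  "flow_set Vb g b tlo thi e =
     (case e of (i, k) \<Rightarrow>
       (\<lambda>\<theta>. (P_ik (Vb i) (Vb k) (g e) (b e) \<theta>, P_ki (Vb i) (Vb k) (g e) (b e) \<theta>))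
         ` {tlo e .. thi e})"

text \<open>tan^-1(b/g), with the convention tan^-1(b/0) = pi/2 (b \<ge> 0).\<close>
definition angle_bound :: "real \<Rightarrow> real \<Rightarrow> real" where
  "angle_bound g b = (if g = 0 then pi / 2 else arctan (b / g))"

text \<open>Feasibility with load vector pd and line regions Reg (Reg = flow_set for the
  original OPF, its convex hull for the convexified OPF). pg = generation,
  fl i k = P_ik.\<close>
definition opf_feasible ::
  "('v::finite \<times> 'v) set \<Rightarrow> ('v \<times> 'v \<Rightarrow> (real \<times> real) set) \<Rightarrow> ('v \<Rightarrow> real) \<Rightarrow>
   ('v \<Rightarrow> real) \<Rightarrow> ('v \<Rightarrow> real) \<Rightarrow> ('v \<Rightarrow> real) \<Rightarrow> ('v \<Rightarrow> 'v \<Rightarrow> real) \<Rightarrow> bool" where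
  "opf_feasible E Reg Plo Phi pd pg fl \<longleftrightarrow>
     (\<forall>i. Plo i \<le> pg i \<and> pg i \<le> Phi i) \<and>
     (\<forall>i. pg i - pd i = (\<Sum>k\<in>nbrs E i. fl i k)) \<and>
     (\<forall>(i, k) \<in> E. (fl i k, fl k i) \<in> Reg (i, k))"

definition opf_value ::
  "('v::finite \<times> 'v) set \<Rightarrow> ('v \<times> 'v \<Rightarrow> (real \<times> real) set) \<Rightarrow> ('v \<Rightarrow> real \<Rightarrow> real) \<Rightarrow>
   ('v \<Rightarrow> real) \<Rightarrow> ('v \<Rightarrow> real) \<Rightarrow> ('v \<Rightarrow> real) \<Rightarrow> real" where
  "opf_value E Reg f Plo Phi pd =
     Inf {(\<Sum>i\<in>UNIV. f i (pg i)) | pg fl. opf_feasible E Reg Plo Phi pd pg fl}"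

text \<open>mu is a Lagrange multiplier vector of the power balance constraints:
  the partial Lagrangian (balance constraints dualized, all other constraints kept)
  is bounded below by the optimal value on the remaining constraint set
  (equivalently, by weak duality, its infimum equals the optimal value).\<close>
definition balance_multiplier ::
  "('v::finite \<times> 'v) set \<Rightarrow> ('v \<times> 'v \<Rightarrow> (real \<times> real) set) \<Rightarrow> ('v \<Rightarrow> real \<Rightarrow> real) \<Rightarrow>
   ('v \<Rightarrow> real) \<Rightarrow> ('v \<Rightarrow> real) \<Rightarrow> ('v \<Rightarrow> real) \<Rightarrow> ('v \<Rightarrow> real) \<Rightarrow> bool" where
  "balance_multiplier E Reg f Plo Phi pd \<mu> \<longleftrightarrow>
     (\<forall>pg fl. (\<forall>i. Plo i \<le> pg i \<and> pg i \<le> Phi i) \<and>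
              (\<forall>(i, k) \<in> E. (fl i k, fl k i) \<in> Reg (i, k)) \<longrightarrow>
        opf_value E Reg f Plo Phi pd \<le>
          (\<Sum>i\<in>UNIV. f i (pg i)) - (\<Sum>i\<in>UNIV. \<mu> i * (pg i - pd i - (\<Sum>k\<in>nbrs E i. fl i k))))"

end

theory Submission
  imports Defs
begin

lemma one_dim_inc:
  fixes p q :: "real \<Rightarrow> real"
  assumes lu: "l \<le> u" and cp: "continuous_on {l..u} p" and cq: "continuous_on {l..u} q"
    and mono: "\<And>s t. l \<le> s \<Longrightarrow> s \<le> t \<Longrightarrow> t \<le> u \<Longrightarrow> p s \<le> p t \<and> q t \<le> q s"
    and t1: "t1 \<in> {l..u}" and t0: "t0 \<in> {l..u}" and p1: "p t1 \<le> B" and p0: "A \<le> p t0" and AB: "A \<le> B"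
  shows "\<exists>m M. m \<le> M \<and> m \<le> q t1 \<and> q t0 \<le> M \<and>
     (\<forall>r lo up. lo \<le> up \<longrightarrow> lo - M \<le> r \<longrightarrow> r \<le> up - m \<longrightarrow>
        (\<exists>t\<in>{l..u}. A \<le> p t \<and> p t \<le> B \<and> lo \<le> r + q t \<and> r + q t \<le> up))"
proof -
  define I where "I = {l..u} \<inter> p -` {A..B}"
  have Ine: "I \<noteq> {}"
  proof (cases "p t0 \<le> B")
    case True then show ?thesis using t0 p0 unfolding I_def by auto
  next
    case False
    then have "p t1 < p t0" using p1 by auto
    then have "t1 < t0" using mono t0 t1 by (meson atLeastAtMost_iff linorder_not_le order.strict_iff_not)
    moreover have "continuous_on {t1..t0} p" using cp t0 t1 by (auto intro: continuous_on_subset)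
    ultimately obtain x where "t1 \<le> x" "x \<le> t0" "p x = B"
      using IVT'[of p t1 B t0] p1 False by auto
    then have "x \<in> I" using t0 t1 AB unfolding I_def by auto
    then show ?thesis by blast
  qed
  have Icl: "closed I" unfolding I_def by (rule continuous_closed_preimage[OF cp]) auto
  have Isub: "I \<subseteq> {l..u}" unfolding I_def by auto
  have bb: "bdd_below I" "bdd_above I" using Isub by (auto intro: bdd_below_mono bdd_above_mono)
  define \<alpha> where "\<alpha> = Inf I"
  define \<beta> where "\<beta> = Sup I"
  have a_in: "\<alpha> \<in> I" unfolding \<alpha>_def using closed_contains_Inf Ine bb Icl by blast
  have b_in: "\<beta> \<in> I" unfolding \<beta>_def using closed_contains_Sup Ine bb Icl by blast
  have a_le: "\<And>t. t \<in> I \<Longrightarrow> \<alpha> \<le> t" unfolding \<alpha>_def using bb by (simp add: cInf_lower)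
  have b_ge: "\<And>t. t \<in> I \<Longrightarrow> t \<le> \<beta>" unfolding \<beta>_def using bb by (simp add: cSup_upper)
  have ab: "\<alpha> \<le> \<beta>" using a_le b_in by blast
  have Iconv: "\<And>t. \<alpha> \<le> t \<Longrightarrow> t \<le> \<beta> \<Longrightarrow> t \<in> I"
  proof -
    fix t assume h: "\<alpha> \<le> t" "t \<le> \<beta>"
    have al: "l \<le> \<alpha>" "\<alpha> \<le> u" "A \<le> p \<alpha>" "p \<alpha> \<le> B" using a_in unfolding I_def by auto
    have bl: "l \<le> \<beta>" "\<beta> \<le> u" "A \<le> p \<beta>" "p \<beta> \<le> B" using b_in unfolding I_def by auto
    have "p \<alpha> \<le> p t" "p t \<le> p \<beta>" using mono[of \<alpha> t] mono[of t \<beta>] h al bl by auto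
    then show "t \<in> I" unfolding I_def using al bl h by auto
  qed
  have aI: "l \<le> \<alpha>" "\<alpha> \<le> u" "A \<le> p \<alpha>" "p \<alpha> \<le> B" using a_in unfolding I_def by auto
  have bI: "l \<le> \<beta>" "\<beta> \<le> u" "A \<le> p \<beta>" "p \<beta> \<le> B" using b_in unfolding I_def by auto
  have mM: "q \<beta> \<le> q \<alpha>" using mono[of \<alpha> \<beta>] aI bI ab by auto
  have i1: "q \<beta> \<le> q t1"
  proof (cases "t1 \<le> \<beta>")
    case True then show ?thesis using mono[of t1 \<beta>] t1 bI by auto
  next
    case False
    then have "p \<beta> \<le> p t1" using mono[of \<beta> t1] t1 bI by auto
    then have "t1 \<in> I" using t1 p1 bI unfolding I_def by auto
    then show ?thesis using b_ge False by auto
  qed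
  have i0: "q t0 \<le> q \<alpha>"
  proof (cases "\<alpha> \<le> t0")
    case True then show ?thesis using mono[of \<alpha> t0] t0 aI by auto
  next
    case False
    then have "p t0 \<le> p \<alpha>" using mono[of t0 \<alpha>] t0 aI by auto
    then have "t0 \<in> I" using t0 p0 aI unfolding I_def by auto
    then show ?thesis using a_le False by auto
  qed
  have iii: "\<forall>r lo up. lo \<le> up \<longrightarrow> lo - q \<alpha> \<le> r \<longrightarrow> r \<le> up - q \<beta> \<longrightarrow>
        (\<exists>t\<in>{l..u}. A \<le> p t \<and> p t \<le> B \<and> lo \<le> r + q t \<and> r + q t \<le> up)"
  proof (intro allI impI)
    fix r lo up assume h: "lo \<le> up" "lo - q \<alpha> \<le> r" "r \<le> up - q \<beta>"
    define w where "w = max (lo - r) (q \<beta>)"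
    have w: "q \<beta> \<le> w" "w \<le> q \<alpha>" "lo - r \<le> w" "w \<le> up - r" using h mM unfolding w_def by auto
    have "continuous_on {\<alpha>..\<beta>} q" using cq aI bI by (auto intro: continuous_on_subset)
    then obtain t where t: "\<alpha> \<le> t" "t \<le> \<beta>" "q t = w" using IVT2'[of q \<beta> w \<alpha>] w ab by auto
    have "t \<in> I" using Iconv t by auto
    then show "\<exists>t\<in>{l..u}. A \<le> p t \<and> p t \<le> B \<and> lo \<le> r + q t \<and> r + q t \<le> up"
      using t w unfolding I_def by (intro bexI[of _ t]) auto
  qed
  show ?thesis using mM i1 i0 iii by blast
qed

lemma adj_sym: "adj E a b = adj E b a" unfolding adj_def by auto

lemma leaf_exists:
  fixes E :: "('v::finite \<times> 'v) set"
  assumes simp: "simple_edges E" and nc: "\<not> has_cycle E" and ne: "E \<noteq> {}"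
  shows "\<exists>j e. e \<in> E \<and> (fst e = j \<or> snd e = j) \<and> (\<forall>e'\<in>E. fst e' = j \<or> snd e' = j \<longrightarrow> e' = e)"
proof -
  define P where "P = {vs. distinct vs \<and> 2 \<le> length vs \<and> (\<forall>m. m + 1 < length vs \<longrightarrow> adj E (vs!m) (vs!(m+1)))}"
  have finP: "finite P"
    by (rule finite_subset[OF _ finite_subset_distinct[of "UNIV :: 'v set"]]) (auto simp: P_def)
  obtain a b where ab: "(a, b) \<in> E" using ne by auto
  have "a \<noteq> b" using simp ab unfolding simple_edges_def by auto
  then have "[a, b] \<in> P" using ab unfolding P_def adj_def by (auto simp: less_Suc_eq)
  then have Pne: "P \<noteq> {}" by auto
  define n where "n = Max (length ` P)"
  have "n \<in> length ` P" unfolding n_def using finP Pne by (intro Max_in) auto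
  then obtain vs where vs: "vs \<in> P" "length vs = n" by auto
  have maxl: "\<And>ws. ws \<in> P \<Longrightarrow> length ws \<le> n" unfolding n_def using finP by auto
  have vsd: "distinct vs" "2 \<le> length vs" "\<And>m. m + 1 < length vs \<Longrightarrow> adj E (vs!m) (vs!(m+1))"
    using vs unfolding P_def by auto
  define j where "j = vs!0"
  define w where "w = vs!1"
  have jw: "adj E j w" using vsd(3)[of 0] vsd(2) unfolding j_def w_def by auto
  define e where "e = (if (j, w) \<in> E then (j, w) else (w, j))"
  have eE: "e \<in> E" using jw unfolding e_def adj_def by auto
  have ej: "fst e = j \<or> snd e = j" unfolding e_def by auto
  have uniq: "e' = e" if e'E: "e' \<in> E" and e'j: "fst e' = j \<or> snd e' = j" for e'
  proof -
    obtain x where x: "e' = (j, x) \<or> e' = (x, j)" using e'j by (cases e') auto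
    have ajx: "adj E j x" using x e'E unfolding adj_def by auto
    have xj: "x \<noteq> j" using x e'E simp unfolding simple_edges_def by auto
    show ?thesis
    proof (cases "x = w")
      case True
      then show ?thesis using x e'E simp unfolding e_def simple_edges_def by auto
    next
      case xw: False
      show ?thesis
      proof (cases "x \<in> set vs")
        case False
        have "x # vs \<in> P"
          unfolding P_def using vsd False
        proof (auto)
          fix m assume "m < length vs"
          then show "adj E ((x # vs) ! m) (vs ! m)"
            using vsd(3)[of "m - 1"] ajx j_def by (cases m) (auto intro: iffD1[OF adj_sym])
        qed
        then have "length (x # vs) \<le> n" using maxl by blast
        then show ?thesis using vs by auto
      next
        case True
        then obtain m where m: "m < length vs" "vs ! m = x" by (auto simp: in_set_conv_nth)
        have "m \<noteq> 0" using m xj j_def by (cases m) auto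
        moreover have "m \<noteq> 1" using m xw w_def by (cases "m = 1") auto
        ultimately have m2: "2 \<le> m" by auto
        define cs where "cs = take (m+1) vs"
        have lcs: "length cs = m + 1" using m unfolding cs_def by auto
        have "has_cycle E"
          unfolding has_cycle_def
        proof (intro exI[of _ cs] conjI allI impI)
          show "3 \<le> length cs" using lcs m2 by auto
          show "distinct cs" unfolding cs_def using vsd by auto
          fix i assume i: "i < length cs"
          show "adj E (cs ! i) (cs ! ((i + 1) mod length cs))"
          proof (cases "i = m")
            case True
            then have "(i + 1) mod length cs = 0" using lcs by auto
            then show ?thesis using True ajx m unfolding cs_def j_def by (auto intro: iffD1[OF adj_sym])
          next
            case False
            then have "i < m" using i lcs by auto
            then have "(i + 1) mod length cs = i + 1" using lcs by auto
            then show ?thesis using vsd(3)[of i] \<open>i < m\<close> m unfolding cs_def by auto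
          qed
        qed
        then show ?thesis using nc by blast
      qed
    qed
  qed
  show ?thesis using eE ej uniq by blast
qed

lemma one_dim:
  fixes p q :: "real \<Rightarrow> real"
  assumes lu: "l \<le> u" and cp: "continuous_on {l..u} p" and cq: "continuous_on {l..u} q"
    and mono: "(\<forall>s t. l \<le> s \<longrightarrow> s \<le> t \<longrightarrow> t \<le> u \<longrightarrow> p s \<le> p t \<and> q t \<le> q s) \<or>
               (\<forall>s t. l \<le> s \<longrightarrow> s \<le> t \<longrightarrow> t \<le> u \<longrightarrow> p t \<le> p s \<and> q s \<le> q t)"
    and t1: "t1 \<in> {l..u}" and t0: "t0 \<in> {l..u}" and p1: "p t1 \<le> B" and p0: "A \<le> p t0" and AB: "A \<le> B"
  shows "\<exists>m M. m \<le> M \<and> m \<le> q t1 \<and> q t0 \<le> M \<and>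
     (\<forall>r lo up. lo \<le> up \<longrightarrow> lo - M \<le> r \<longrightarrow> r \<le> up - m \<longrightarrow>
        (\<exists>t\<in>{l..u}. A \<le> p t \<and> p t \<le> B \<and> lo \<le> r + q t \<and> r + q t \<le> up))"
  using mono
proof
  assume "\<forall>s t. l \<le> s \<longrightarrow> s \<le> t \<longrightarrow> t \<le> u \<longrightarrow> p s \<le> p t \<and> q t \<le> q s"
  then show ?thesis using one_dim_inc[OF lu cp cq _ t1 t0 p1 p0 AB] by blast
next
  assume m2: "\<forall>s t. l \<le> s \<longrightarrow> s \<le> t \<longrightarrow> t \<le> u \<longrightarrow> p t \<le> p s \<and> q s \<le> q t"
  define p' where "p' = (\<lambda>x. p (- x))"
  define q' where "q' = (\<lambda>x. q (- x))"
  have cp': "continuous_on {-u..-l} p'" unfolding p'_def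
    by (rule continuous_on_compose2[OF cp]) (auto intro: continuous_intros)
  have cq': "continuous_on {-u..-l} q'" unfolding q'_def
    by (rule continuous_on_compose2[OF cq]) (auto intro: continuous_intros)
  have mono': "\<And>s t. -u \<le> s \<Longrightarrow> s \<le> t \<Longrightarrow> t \<le> -l \<Longrightarrow> p' s \<le> p' t \<and> q' t \<le> q' s"
    using m2 unfolding p'_def q'_def by auto
  have "\<exists>m M. m \<le> M \<and> m \<le> q' (-t1) \<and> q' (-t0) \<le> M \<and>
     (\<forall>r lo up. lo \<le> up \<longrightarrow> lo - M \<le> r \<longrightarrow> r \<le> up - m \<longrightarrow>
        (\<exists>t\<in>{-u..-l}. A \<le> p' t \<and> p' t \<le> B \<and> lo \<le> r + q' t \<and> r + q' t \<le> up))"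
    by (rule one_dim_inc[OF _ cp' cq' mono']) (use lu t1 t0 p1 p0 AB in \<open>auto simp: p'_def q'_def\<close>)
  then obtain m M where mM: "m \<le> M" "m \<le> q t1" "q t0 \<le> M" and
    r: "\<forall>r lo up. lo \<le> up \<longrightarrow> lo - M \<le> r \<longrightarrow> r \<le> up - m \<longrightarrow>
        (\<exists>t\<in>{-u..-l}. A \<le> p' t \<and> p' t \<le> B \<and> lo \<le> r + q' t \<and> r + q' t \<le> up)"
    unfolding q'_def by auto
  have "\<forall>r lo up. lo \<le> up \<longrightarrow> lo - M \<le> r \<longrightarrow> r \<le> up - m \<longrightarrow>
        (\<exists>t\<in>{l..u}. A \<le> p t \<and> p t \<le> B \<and> lo \<le> r + q t \<and> r + q t \<le> up)"
  proof (intro allI impI)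
    fix r lo up assume h: "lo \<le> up" "lo - M \<le> r" "r \<le> up - m"
    then obtain t where t: "t \<in> {-u..-l}" "A \<le> p' t \<and> p' t \<le> B \<and> lo \<le> r + q' t \<and> r + q' t \<le> up"
      using r by blast
    show "\<exists>t\<in>{l..u}. A \<le> p t \<and> p t \<le> B \<and> lo \<le> r + q t \<and> r + q t \<le> up"
      using t unfolding p'_def q'_def by (intro bexI[of _ "-t"]) auto
  qed
  then show ?thesis using mM by blast
qed

definition injx :: "('v \<times> 'v) set \<Rightarrow> ('v \<times> 'v \<Rightarrow> real \<Rightarrow> real) \<Rightarrow> ('v \<times> 'v \<Rightarrow> real \<Rightarrow> real)
   \<Rightarrow> ('v \<times> 'v \<Rightarrow> real) \<Rightarrow> 'v \<Rightarrow> real" where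
  "injx E a c \<theta> x = (\<Sum>k\<in>nbrs E x. if (x, k) \<in> E then a (x, k) (\<theta> (x, k)) else c (k, x) (\<theta> (k, x)))"

lemma injx_cong:
  assumes "\<forall>e\<in>E. \<theta> e = \<theta>' e"
  shows "injx E a c \<theta> x = injx E a c \<theta>' x"
  unfolding injx_def
  by (rule sum.cong) (use assms in \<open>auto simp: nbrs_def adj_def\<close>)

lemma has_cycle_mono: "has_cycle E' \<Longrightarrow> E' \<subseteq> E \<Longrightarrow> has_cycle E"
  unfolding has_cycle_def adj_def by blast

lemma dom_lemma:
  fixes E :: "('v::finite \<times> 'v) set"
  assumes "simple_edges E" "\<not> has_cycle E"
    and reg: "\<forall>e\<in>E. l e \<le> u e \<and> continuous_on {l e..u e} (a e) \<and> continuous_on {l e..u e} (c e) \<and>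
                 (\<forall>s t. l e \<le> s \<longrightarrow> s \<le> t \<longrightarrow> t \<le> u e \<longrightarrow> a e s \<le> a e t \<and> c e t \<le> c e s)"
    and "\<forall>e\<in>E. \<theta>1 e \<in> {l e..u e}" "\<forall>e\<in>E. \<theta>0 e \<in> {l e..u e}"
    and "\<forall>x. injx E a c \<theta>1 x \<le> up x" "\<forall>x. lo x \<le> injx E a c \<theta>0 x" "\<forall>x. lo x \<le> up x"
  shows "\<exists>\<theta>. (\<forall>e\<in>E. \<theta> e \<in> {l e..u e}) \<and> (\<forall>x. lo x \<le> injx E a c \<theta> x \<and> injx E a c \<theta> x \<le> up x)"
  using assms
proof (induction "card E" arbitrary: E lo up \<theta>1 \<theta>0 rule: less_induct)
  case less
  note simpE = less.prems(1) and ncE = less.prems(2) and regE = less.prems(3)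
    and th1 = less.prems(4) and th0 = less.prems(5) and i1 = less.prems(6) and i0 = less.prems(7)
    and lu = less.prems(8)
  show ?case
  proof (cases "E = {}")
    case True
    then have "\<And>\<theta> x. injx E a c \<theta> x = 0" unfolding injx_def nbrs_def adj_def by auto
    then show ?thesis using i1 i0 True by auto
  next
    case False
    obtain j e where eE: "e \<in> E" and ej: "fst e = j \<or> snd e = j"
      and uniq: "\<forall>e'\<in>E. fst e' = j \<or> snd e' = j \<longrightarrow> e' = e"
      using leaf_exists[OF simpE ncE False] by blast
    define i where "i = (if fst e = j then snd e else fst e)"
    have e_cases: "e = (j, i) \<or> e = (i, j)" unfolding i_def using ej by (cases e) auto
    have noloop: "\<And>x. (x, x) \<notin> E" using simpE unfolding simple_edges_def by blast
    have ij: "i \<noteq> j" using e_cases eE noloop by metis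
    have ji_iff: "(j, i) \<in> E \<longleftrightarrow> e = (j, i)" using uniq[rule_format, of "(j,i)"] eE by auto
    have ij_iff: "(i, j) \<in> E \<longleftrightarrow> e = (i, j)" using uniq[rule_format, of "(i,j)"] eE by auto
    define E' where "E' = E - {e}"
    have cardE': "card E' < card E" unfolding E'_def using eE by (intro card_Diff1_less) simp_all
    have simpE': "simple_edges E'" using simpE unfolding E'_def simple_edges_def by auto
    have ncE': "\<not> has_cycle E'" using ncE has_cycle_mono[of E' E] unfolding E'_def by auto
    have regE': "\<forall>e\<in>E'. l e \<le> u e \<and> continuous_on {l e..u e} (a e) \<and> continuous_on {l e..u e} (c e) \<and>
                 (\<forall>s t. l e \<le> s \<longrightarrow> s \<le> t \<longrightarrow> t \<le> u e \<longrightarrow> a e s \<le> a e t \<and> c e t \<le> c e s)"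
      using regE unfolding E'_def by auto
    define \<psi>j where "\<psi>j = (if (j, i) \<in> E then a (j, i) else c (i, j))"
    define \<psi>i where "\<psi>i = (if (i, j) \<in> E then a (i, j) else c (j, i))"
    have nbj: "nbrs E j = {i}"
    proof -
      have "adj E j k \<longleftrightarrow> k = i" for k
        using uniq[rule_format, of "(j,k)"] uniq[rule_format, of "(k,j)"] e_cases eE ij unfolding adj_def by auto
      then show ?thesis unfolding nbrs_def by auto
    qed
    have nbj': "nbrs E' j = {}"
    proof -
      have "\<not> adj E' j k" for k
        using uniq[rule_format, of "(j,k)"] uniq[rule_format, of "(k,j)"] unfolding adj_def E'_def by auto
      then show ?thesis unfolding nbrs_def by auto
    qed
    have injj: "injx E a c \<theta> j = \<psi>j (\<theta> e)" for \<theta>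
      unfolding injx_def nbj \<psi>j_def using ji_iff ij_iff e_cases ij by auto
    have injj': "injx E' a c \<theta> j = 0" for \<theta>
      unfolding injx_def nbj' by simp
    have jn: "j \<notin> nbrs E' i"
      using uniq[rule_format, of "(j,i)"] uniq[rule_format, of "(i,j)"] unfolding nbrs_def adj_def E'_def by auto
    have nbi: "nbrs E i = insert j (nbrs E' i)"
      using eE e_cases unfolding nbrs_def adj_def E'_def by auto
    have injo: "injx E a c \<theta> x = injx E' a c \<theta> x" if "x \<noteq> i" "x \<noteq> j" for \<theta> x
    proof -
      have "nbrs E x = nbrs E' x" using that e_cases unfolding nbrs_def adj_def E'_def by auto
      moreover have "\<And>k. ((x, k) \<in> E) = ((x, k) \<in> E')" using that e_cases unfolding E'_def by auto
      ultimately show ?thesis unfolding injx_def by simp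
    qed
    have inji: "injx E a c \<theta> i = \<psi>i (\<theta> e) + injx E' a c \<theta> i" for \<theta>
    proof -
      have "injx E a c \<theta> i = (if (i, j) \<in> E then a (i, j) (\<theta> (i, j)) else c (j, i) (\<theta> (j, i))) +
            (\<Sum>k\<in>nbrs E' i. if (i, k) \<in> E then a (i, k) (\<theta> (i, k)) else c (k, i) (\<theta> (k, i)))"
        unfolding injx_def nbi using jn by (simp add: sum.insert)
      also have "(\<Sum>k\<in>nbrs E' i. if (i, k) \<in> E then a (i, k) (\<theta> (i, k)) else c (k, i) (\<theta> (k, i)))
          = injx E' a c \<theta> i"
        unfolding injx_def
        by (rule sum.cong) (use jn e_cases in \<open>auto simp: E'_def\<close>)
      finally show ?thesis unfolding \<psi>i_def using ji_iff ij_iff e_cases ij by auto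
    qed
    have rege: "l e \<le> u e" "continuous_on {l e..u e} \<psi>j" "continuous_on {l e..u e} \<psi>i"
      "(\<forall>s t. l e \<le> s \<longrightarrow> s \<le> t \<longrightarrow> t \<le> u e \<longrightarrow> \<psi>j s \<le> \<psi>j t \<and> \<psi>i t \<le> \<psi>i s) \<or>
       (\<forall>s t. l e \<le> s \<longrightarrow> s \<le> t \<longrightarrow> t \<le> u e \<longrightarrow> \<psi>j t \<le> \<psi>j s \<and> \<psi>i s \<le> \<psi>i t)"
    proof -
      have re: "l e \<le> u e" "continuous_on {l e..u e} (a e)" "continuous_on {l e..u e} (c e)"
        "\<forall>s t. l e \<le> s \<longrightarrow> s \<le> t \<longrightarrow> t \<le> u e \<longrightarrow> a e s \<le> a e t \<and> c e t \<le> c e s"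
        using regE eE by auto
      have d: "(\<psi>j = a e \<and> \<psi>i = c e) \<or> (\<psi>j = c e \<and> \<psi>i = a e)"
        using e_cases ji_iff ij_iff ij unfolding \<psi>j_def \<psi>i_def by auto
      show "l e \<le> u e" using re by simp
      show "continuous_on {l e..u e} \<psi>j" using d re(2,3) by (elim disjE conjE) simp_all
      show "continuous_on {l e..u e} \<psi>i" using d re(2,3) by (elim disjE conjE) simp_all
      show "(\<forall>s t. l e \<le> s \<longrightarrow> s \<le> t \<longrightarrow> t \<le> u e \<longrightarrow> \<psi>j s \<le> \<psi>j t \<and> \<psi>i t \<le> \<psi>i s) \<or>
       (\<forall>s t. l e \<le> s \<longrightarrow> s \<le> t \<longrightarrow> t \<le> u e \<longrightarrow> \<psi>j t \<le> \<psi>j s \<and> \<psi>i s \<le> \<psi>i t)"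
        using d re(4) by (elim disjE conjE) simp_all
    qed
    obtain m M where mM: "m \<le> M" "m \<le> \<psi>i (\<theta>1 e)" "\<psi>i (\<theta>0 e) \<le> M"
      and iii: "\<forall>r lo' up'. lo' \<le> up' \<longrightarrow> lo' - M \<le> r \<longrightarrow> r \<le> up' - m \<longrightarrow>
        (\<exists>t\<in>{l e..u e}. lo j \<le> \<psi>j t \<and> \<psi>j t \<le> up j \<and> lo' \<le> r + \<psi>i t \<and> r + \<psi>i t \<le> up')"
    proof -
      have h1: "\<theta>1 e \<in> {l e..u e}" "\<theta>0 e \<in> {l e..u e}" using th1 th0 eE by auto
      have h2: "\<psi>j (\<theta>1 e) \<le> up j" using i1 injj[of \<theta>1] by metis
      have h3: "lo j \<le> \<psi>j (\<theta>0 e)" using i0 injj[of \<theta>0] by metis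
      show ?thesis using one_dim[OF rege h1 h2 h3 lu[rule_format, of j]] that by blast
    qed
    define lo' where "lo' = lo(i := lo i - M, j := 0)"
    define up' where "up' = up(i := up i - m, j := 0)"
    have i1': "\<forall>x. injx E' a c \<theta>1 x \<le> up' x"
    proof
      fix x show "injx E' a c \<theta>1 x \<le> up' x"
      proof (cases "x = j")
        case True then show ?thesis using injj'[of \<theta>1] unfolding up'_def by simp
      next
        case xj: False
        show ?thesis
        proof (cases "x = i")
          case True then show ?thesis using inji[of \<theta>1] i1[rule_format, of i] mM ij unfolding up'_def by simp
        next
          case False then show ?thesis using injo[OF False xj, of \<theta>1] i1[rule_format, of x] xj unfolding up'_def by simp
        qed
      qed
    qed
    have i0': "\<forall>x. lo' x \<le> injx E' a c \<theta>0 x"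
    proof
      fix x show "lo' x \<le> injx E' a c \<theta>0 x"
      proof (cases "x = j")
        case True then show ?thesis using injj'[of \<theta>0] unfolding lo'_def by simp
      next
        case xj: False
        show ?thesis
        proof (cases "x = i")
          case True then show ?thesis using inji[of \<theta>0] i0[rule_format, of i] mM ij unfolding lo'_def by simp
        next
          case False then show ?thesis using injo[OF False xj, of \<theta>0] i0[rule_format, of x] xj unfolding lo'_def by simp
        qed
      qed
    qed
    have lu': "\<forall>x. lo' x \<le> up' x"
    proof
      fix x show "lo' x \<le> up' x" using lu[rule_format, of x] lu[rule_format, of i] mM ij unfolding lo'_def up'_def by auto
    qed
    obtain \<theta>' where th': "\<forall>e\<in>E'. \<theta>' e \<in> {l e..u e}"
      and ok': "\<forall>x. lo' x \<le> injx E' a c \<theta>' x \<and> injx E' a c \<theta>' x \<le> up' x"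
      using less.hyps[OF cardE' simpE' ncE' regE'] th1 th0 i1' i0' lu' unfolding E'_def by blast
    define r where "r = injx E' a c \<theta>' i"
    have "lo i - M \<le> r" "r \<le> up i - m" using ok'[rule_format, of i] ij unfolding r_def lo'_def up'_def by auto
    then obtain t where t: "t \<in> {l e..u e}" "lo j \<le> \<psi>j t" "\<psi>j t \<le> up j" "lo i \<le> r + \<psi>i t" "r + \<psi>i t \<le> up i"
      using iii lu by blast
    define \<theta> where "\<theta> = \<theta>'(e := t)"
    have same: "injx E' a c \<theta> x = injx E' a c \<theta>' x" for x
      by (rule injx_cong) (auto simp: \<theta>_def E'_def)
    show ?thesis
    proof (intro exI[of _ \<theta>] conjI ballI allI)
      fix e' assume "e' \<in> E" then show "\<theta> e' \<in> {l e'..u e'}"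
        using th' t unfolding \<theta>_def E'_def by (cases "e' = e") auto
    next
      fix x
      have "lo x \<le> injx E a c \<theta> x \<and> injx E a c \<theta> x \<le> up x"
      proof (cases "x = j")
        case True then show ?thesis using injj[of \<theta>] t unfolding \<theta>_def by auto
      next
        case xj: False
        show ?thesis
        proof (cases "x = i")
          case True then show ?thesis using inji[of \<theta>] same[of i] t unfolding r_def
            by (auto simp: \<theta>_def)
        next
          case False
          then show ?thesis using injo[OF False xj, of \<theta>] same[of x] ok'[rule_format, of x] xj
            unfolding lo'_def up'_def by auto
        qed
      qed
      then show "lo x \<le> injx E a c \<theta> x" "injx E a c \<theta> x \<le> up x" by auto
    qed
  qed
qed

lemma angle_cond:
  fixes G Bb lo hi \<theta> :: real
  assumes G: "G \<ge> 0" and Bb: "Bb \<ge> 0"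
    and a1: "- angle_bound G Bb < lo" and a2: "hi < angle_bound G Bb" and t: "lo \<le> \<theta>" "\<theta> \<le> hi"
  shows "G * \<bar>sin \<theta>\<bar> < Bb * cos \<theta> \<or> (Bb = 0 \<and> G = 0)"
proof (cases "G = 0")
  case True
  then have "- (pi/2) < \<theta>" "\<theta> < pi/2" using a1 a2 t unfolding angle_bound_def by auto
  then have "cos \<theta> > 0" by (rule cos_gt_zero_pi)
  then show ?thesis using True Bb by (cases "Bb = 0") auto
next
  case False
  then have Gp: "G > 0" using G by auto
  have ab: "angle_bound G Bb = arctan (Bb / G)" using False unfolding angle_bound_def by auto
  have th: "\<bar>\<theta>\<bar> < arctan (Bb / G)" using a1 a2 t ab by auto
  have "arctan (Bb / G) < pi/2" by (rule arctan_ubound)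
  then have th2: "- (pi/2) < \<theta>" "\<theta> < pi/2" "- (pi/2) < \<bar>\<theta>\<bar>" "\<bar>\<theta>\<bar> < pi/2" using th by auto
  have cpos: "cos \<theta> > 0" using th2(1,2) by (rule cos_gt_zero_pi)
  have "arctan (tan \<bar>\<theta>\<bar>) = \<bar>\<theta>\<bar>" using th2(3,4) by (rule arctan_tan)
  then have "arctan (tan \<bar>\<theta>\<bar>) < arctan (Bb / G)" using th by simp
  then have tl: "tan \<bar>\<theta>\<bar> < Bb / G" by (simp add: arctan_less_iff)
  have "tan \<bar>\<theta>\<bar> = \<bar>sin \<theta>\<bar> / cos \<theta>"
  proof (cases "\<theta> \<ge> 0")
    case True
    have "sin \<theta> \<ge> 0" using True th2 by (intro sin_ge_zero) auto
    then show ?thesis using True by (simp add: tan_def)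
  next
    case False
    have "sin (-\<theta>) \<ge> 0" using False th2 by (intro sin_ge_zero) auto
    then show ?thesis using False by (simp add: tan_def)
  qed
  then have "\<bar>sin \<theta>\<bar> / cos \<theta> < Bb / G" using tl by simp
  then have "\<bar>sin \<theta>\<bar> * G < Bb * cos \<theta>" using cpos Gp by (simp add: divide_simps)
  then show ?thesis by (simp add: mult.commute)
qed

lemma tangent_ineq:
  fixes Vi Vk G Bb \<theta> \<theta>0 :: real
  assumes "Vi > 0" "Vk > 0" "G \<ge> 0" "Bb \<ge> 0"
  shows "(Bb * cos \<theta>0 - G * sin \<theta>0) * (P_ik Vi Vk G Bb \<theta> - P_ik Vi Vk G Bb \<theta>0)
       + (Bb * cos \<theta>0 + G * sin \<theta>0) * (P_ki Vi Vk G Bb \<theta> - P_ki Vi Vk G Bb \<theta>0) \<ge> 0"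
proof -
  have sc: "sin \<theta>0 ^ 2 + cos \<theta>0 ^ 2 = 1" by simp
  have "(Bb * cos \<theta>0 - G * sin \<theta>0) * (P_ik Vi Vk G Bb \<theta> - P_ik Vi Vk G Bb \<theta>0)
       + (Bb * cos \<theta>0 + G * sin \<theta>0) * (P_ki Vi Vk G Bb \<theta> - P_ki Vi Vk G Bb \<theta>0)
     = 2 * Vi * Vk * Bb * G * (1 - cos (\<theta> - \<theta>0))"
    unfolding P_ik_def P_ki_def cos_diff using sc by algebra
  also have "\<dots> \<ge> 0" using assms by (intro mult_nonneg_nonneg) auto
  finally show ?thesis .
qed

lemma P_mono:
  fixes Vi Vk G Bb lo hi :: real
  assumes V: "Vi > 0" "Vk > 0" and G: "G \<ge> 0" and Bb: "Bb \<ge> 0"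
    and a1: "- angle_bound G Bb < lo" and a2: "hi < angle_bound G Bb"
    and st: "lo \<le> s" "s \<le> t" "t \<le> hi"
  shows "P_ik Vi Vk G Bb s \<le> P_ik Vi Vk G Bb t \<and> P_ki Vi Vk G Bb t \<le> P_ki Vi Vk G Bb s"
proof -
  have cond: "G * \<bar>sin x\<bar> \<le> Bb * cos x" if "s \<le> x" "x \<le> t" for x
  proof -
    have "G * \<bar>sin x\<bar> < Bb * cos x \<or> (Bb = 0 \<and> G = 0)"
      using angle_cond[OF G Bb a1 a2, of x] that st by auto
    then show ?thesis by auto
  qed
  have d1: "(P_ik Vi Vk G Bb has_real_derivative Vi * Vk * (Bb * cos x + G * sin x)) (at x)" for x
    unfolding P_ik_def[abs_def] by (auto intro!: derivative_eq_intros simp: algebra_simps)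
  have d2: "(P_ki Vi Vk G Bb has_real_derivative - (Vi * Vk * (Bb * cos x - G * sin x))) (at x)" for x
    unfolding P_ki_def[abs_def] by (auto intro!: derivative_eq_intros simp: algebra_simps)
  have "P_ik Vi Vk G Bb s \<le> P_ik Vi Vk G Bb t"
  proof (rule DERIV_nonneg_imp_nondecreasing[OF st(2)])
    fix x assume "s \<le> x" "x \<le> t"
    then have "G * \<bar>sin x\<bar> \<le> Bb * cos x" by (rule cond)
    moreover have "- (G * sin x) \<le> G * \<bar>sin x\<bar>" using G mult_left_mono[of "- sin x" "\<bar>sin x\<bar>" G] by simp
    ultimately have "0 \<le> Bb * cos x + G * sin x" by linarith
    then show "\<exists>y. (P_ik Vi Vk G Bb has_real_derivative y) (at x) \<and> 0 \<le> y"
      using d1 V by (intro exI[of _ "Vi * Vk * (Bb * cos x + G * sin x)"]) auto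
  qed
  moreover have "P_ki Vi Vk G Bb t \<le> P_ki Vi Vk G Bb s"
  proof (rule DERIV_nonpos_imp_nonincreasing[OF st(2)])
    fix x assume "s \<le> x" "x \<le> t"
    then have "G * \<bar>sin x\<bar> \<le> Bb * cos x" by (rule cond)
    moreover have "G * sin x \<le> G * \<bar>sin x\<bar>" using G by (intro mult_left_mono) auto
    ultimately have "0 \<le> Bb * cos x - G * sin x" by linarith
    then show "\<exists>y. (P_ki Vi Vk G Bb has_real_derivative y) (at x) \<and> y \<le> 0"
      using d2 V by (intro exI[of _ "- (Vi * Vk * (Bb * cos x - G * sin x))"]) auto
  qed
  ultimately show ?thesis by auto
qed

lemma hull_key:
  fixes Vi Vk G Bb lo hi :: real
  assumes V: "Vi > 0" "Vk > 0" and G: "G \<ge> 0" and Bb: "Bb \<ge> 0"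
    and a1: "- angle_bound G Bb < lo" and a2: "hi < angle_bound G Bb"
    and t12: "lo \<le> t1" "t1 \<le> t2" "t2 \<le> hi" and uv: "u \<ge> 0" "v \<ge> 0" "u + v = 1"
  shows "\<exists>t0\<in>{lo..hi}. P_ik Vi Vk G Bb t0 \<le> u * P_ik Vi Vk G Bb t1 + v * P_ik Vi Vk G Bb t2
                    \<and> P_ki Vi Vk G Bb t0 \<le> u * P_ki Vi Vk G Bb t1 + v * P_ki Vi Vk G Bb t2"
proof (cases "Bb = 0 \<and> G = 0")
  case True
  have "\<And>\<theta>. P_ik Vi Vk 0 0 \<theta> = 0 \<and> P_ki Vi Vk 0 0 \<theta> = 0" by (simp add: P_ik_def P_ki_def)
  then show ?thesis using t12 True by (intro bexI[of _ t1]) auto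
next
  case False
  let ?X = "P_ik Vi Vk G Bb" and ?Y = "P_ki Vi Vk G Bb"
  have m12: "?X t1 \<le> ?X t2" using P_mono[OF V G Bb a1 a2, of t1 t2] t12 by auto
  define wx where "wx = u * ?X t1 + v * ?X t2"
  define wy where "wy = u * ?Y t1 + v * ?Y t2"
  have "?X t1 \<le> wx" "wx \<le> ?X t2"
  proof -
    have uu: "u = 1 - v" "v = 1 - u" using uv by linarith+
    have "wx = ?X t1 + v * (?X t2 - ?X t1)" unfolding wx_def uu(1) by (simp add: algebra_simps)
    then show "?X t1 \<le> wx" using m12 uv by auto
    have "wx = ?X t2 - u * (?X t2 - ?X t1)" unfolding wx_def uu(2) by (simp add: algebra_simps)
    then show "wx \<le> ?X t2" using m12 uv by auto
  qed
  moreover have "continuous_on {t1..t2} ?X" unfolding P_ik_def[abs_def] by (intro continuous_intros)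
  ultimately obtain t0 where t0: "t1 \<le> t0" "t0 \<le> t2" "?X t0 = wx"
    using IVT'[of ?X t1 wx t2] t12 by auto
  have cnd: "G * \<bar>sin t0\<bar> < Bb * cos t0"
    using angle_cond[OF G Bb a1 a2, of t0] t0 t12 False by auto
  have Ny: "Bb * cos t0 + G * sin t0 > 0"
  proof -
    have "- (G * sin t0) \<le> G * \<bar>sin t0\<bar>" using G mult_left_mono[of "- sin t0" "\<bar>sin t0\<bar>" G] by simp
    then show ?thesis using cnd by linarith
  qed
  define Nx where "Nx = Bb * cos t0 - G * sin t0"
  define Ny where "Ny = Bb * cos t0 + G * sin t0"
  have ti1: "Nx * (?X t1 - ?X t0) + Ny * (?Y t1 - ?Y t0) \<ge> 0"
    unfolding Nx_def Ny_def by (rule tangent_ineq[OF V G Bb])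
  have ti2: "Nx * (?X t2 - ?X t0) + Ny * (?Y t2 - ?Y t0) \<ge> 0"
    unfolding Nx_def Ny_def by (rule tangent_ineq[OF V G Bb])
  have "u * (Nx * (?X t1 - ?X t0) + Ny * (?Y t1 - ?Y t0)) + v * (Nx * (?X t2 - ?X t0) + Ny * (?Y t2 - ?Y t0)) \<ge> 0"
    using ti1 ti2 uv by (metis add_nonneg_nonneg mult_nonneg_nonneg)
  moreover have "u * (Nx * (?X t1 - ?X t0) + Ny * (?Y t1 - ?Y t0)) + v * (Nx * (?X t2 - ?X t0) + Ny * (?Y t2 - ?Y t0))
     = Nx * (wx - ?X t0) + Ny * (wy - ?Y t0)"
  proof -
    have "u * (Nx * (?X t1 - ?X t0) + Ny * (?Y t1 - ?Y t0)) + v * (Nx * (?X t2 - ?X t0) + Ny * (?Y t2 - ?Y t0))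
       = Nx * (wx - (u + v) * ?X t0) + Ny * (wy - (u + v) * ?Y t0)"
      unfolding wx_def wy_def by (simp add: algebra_simps)
    then show ?thesis using uv(3) by simp
  qed
  ultimately have "Ny * (wy - ?Y t0) \<ge> 0" using t0(3) by simp
  then have "wy - ?Y t0 \<ge> 0" using Ny unfolding Ny_def by (simp add: zero_le_mult_iff)
  then show ?thesis using t0 t12 unfolding wx_def wy_def by (intro bexI[of _ t0]) auto
qed

lemma hull_dom:
  fixes Vi Vk G Bb lo hi :: real
  assumes V: "Vi > 0" "Vk > 0" and G: "G \<ge> 0" and Bb: "Bb \<ge> 0"
    and a1: "- angle_bound G Bb < lo" and a2: "hi < angle_bound G Bb"
    and z: "z \<in> convex hull ((\<lambda>\<theta>. (P_ik Vi Vk G Bb \<theta>, P_ki Vi Vk G Bb \<theta>)) ` {lo..hi})"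
  shows "\<exists>\<theta>\<in>{lo..hi}. P_ik Vi Vk G Bb \<theta> \<le> fst z \<and> P_ki Vi Vk G Bb \<theta> \<le> snd z"
proof -
  define U where "U = {z. \<exists>\<theta>\<in>{lo..hi}. P_ik Vi Vk G Bb \<theta> \<le> fst z \<and> P_ki Vi Vk G Bb \<theta> \<le> snd z}"
  have sub: "(\<lambda>\<theta>. (P_ik Vi Vk G Bb \<theta>, P_ki Vi Vk G Bb \<theta>)) ` {lo..hi} \<subseteq> U" unfolding U_def by auto
  have cU: "convex U"
    unfolding convex_def
  proof (intro ballI allI impI)
    fix x y :: "real \<times> real" and u v :: real
    assume x: "x \<in> U" and y: "y \<in> U" and u: "0 \<le> u" and v: "0 \<le> v" and uv: "u + v = 1"
    obtain t1 where t1: "t1 \<in> {lo..hi}" "P_ik Vi Vk G Bb t1 \<le> fst x" "P_ki Vi Vk G Bb t1 \<le> snd x"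
      using x unfolding U_def by auto
    obtain t2 where t2: "t2 \<in> {lo..hi}" "P_ik Vi Vk G Bb t2 \<le> fst y" "P_ki Vi Vk G Bb t2 \<le> snd y"
      using y unfolding U_def by auto
    have "\<exists>t0\<in>{lo..hi}. P_ik Vi Vk G Bb t0 \<le> u * P_ik Vi Vk G Bb t1 + v * P_ik Vi Vk G Bb t2
                    \<and> P_ki Vi Vk G Bb t0 \<le> u * P_ki Vi Vk G Bb t1 + v * P_ki Vi Vk G Bb t2"
    proof (cases "t1 \<le> t2")
      case True
      then show ?thesis using hull_key[OF V G Bb a1 a2, of t1 t2 u v] t1 t2 u v uv by auto
    next
      case False
      then show ?thesis using hull_key[OF V G Bb a1 a2, of t2 t1 v u] t1 t2 u v uv by (auto simp: add.commute)
    qed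
    then obtain t0 where t0: "t0 \<in> {lo..hi}" "P_ik Vi Vk G Bb t0 \<le> u * P_ik Vi Vk G Bb t1 + v * P_ik Vi Vk G Bb t2"
      "P_ki Vi Vk G Bb t0 \<le> u * P_ki Vi Vk G Bb t1 + v * P_ki Vi Vk G Bb t2" by blast
    have "u * P_ik Vi Vk G Bb t1 + v * P_ik Vi Vk G Bb t2 \<le> u * fst x + v * fst y"
      using t1 t2 u v by (intro add_mono mult_left_mono) auto
    moreover have "u * P_ki Vi Vk G Bb t1 + v * P_ki Vi Vk G Bb t2 \<le> u * snd x + v * snd y"
      using t1 t2 u v by (intro add_mono mult_left_mono) auto
    ultimately show "u *\<^sub>R x + v *\<^sub>R y \<in> U" unfolding U_def using t0
      by (intro CollectI bexI[of _ t0]) auto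
  qed
  have "convex hull ((\<lambda>\<theta>. (P_ik Vi Vk G Bb \<theta>, P_ki Vi Vk G Bb \<theta>)) ` {lo..hi}) \<subseteq> U"
    using hull_minimal[of _ U convex] sub cU by blast
  then show ?thesis using z unfolding U_def by auto
qed

lemma ov_bdd:
  fixes f :: "'v::finite \<Rightarrow> real \<Rightarrow> real"
  assumes "\<forall>i. mono (f i)"
  shows "bdd_below {(\<Sum>i\<in>UNIV. f i (pg i)) | pg fl. opf_feasible E Reg Plo Phi d pg fl}"
proof (rule bdd_belowI[of _ "\<Sum>i\<in>UNIV. f i (Plo i)"])
  fix x assume "x \<in> {(\<Sum>i\<in>UNIV. f i (pg i)) | pg fl. opf_feasible E Reg Plo Phi d pg fl}"
  then obtain pg fl where x: "x = (\<Sum>i\<in>UNIV. f i (pg i))" and fe: "opf_feasible E Reg Plo Phi d pg fl" by auto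
  have fi: "\<And>i. f i (Plo i) \<le> f i (pg i)" using fe assms unfolding opf_feasible_def by (meson monoD)
  show "(\<Sum>i\<in>UNIV. f i (Plo i)) \<le> x" unfolding x using fi by (simp add: sum_mono)
qed

lemma ov_lower:
  fixes f :: "'v::finite \<Rightarrow> real \<Rightarrow> real"
  assumes "\<forall>i. mono (f i)" "opf_feasible E Reg Plo Phi d pg fl"
  shows "opf_value E Reg f Plo Phi d \<le> (\<Sum>i\<in>UNIV. f i (pg i))"
proof -
  have "(\<Sum>i\<in>UNIV. f i (pg i)) \<in> {(\<Sum>i\<in>UNIV. f i (pg i)) | pg fl. opf_feasible E Reg Plo Phi d pg fl}"
    using assms(2) by auto
  then show ?thesis unfolding opf_value_def by (rule cInf_lower[OF _ ov_bdd[OF assms(1)]])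
qed

lemma ov_greatest:
  fixes f :: "'v::finite \<Rightarrow> real \<Rightarrow> real"
  assumes "opf_feasible E Reg Plo Phi d pg0 fl0"
    and "\<And>pg fl. opf_feasible E Reg Plo Phi d pg fl \<Longrightarrow> c \<le> (\<Sum>i\<in>UNIV. f i (pg i))"
  shows "c \<le> opf_value E Reg f Plo Phi d"
proof -
  have "{(\<Sum>i\<in>UNIV. f i (pg i)) | pg fl. opf_feasible E Reg Plo Phi d pg fl} \<noteq> {}"
    using assms(1) by blast
  moreover have "c \<le> x" if xin: "x \<in> {(\<Sum>i\<in>UNIV. f i (pg i)) | pg fl. opf_feasible E Reg Plo Phi d pg fl}" for x
  proof -
    obtain pg fl where "x = (\<Sum>i\<in>UNIV. f i (pg i))" "opf_feasible E Reg Plo Phi d pg fl" using xin by blast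
    then show ?thesis using assms(2)[of pg fl] by simp
  qed
  ultimately show ?thesis unfolding opf_value_def by (rule cInf_greatest)
qed

lemma ov_approx:
  fixes f :: "'v::finite \<Rightarrow> real \<Rightarrow> real"
  assumes "opf_feasible E Reg Plo Phi d pg0 fl0" "e > 0"
  shows "\<exists>pg fl. opf_feasible E Reg Plo Phi d pg fl \<and> (\<Sum>i\<in>UNIV. f i (pg i)) < opf_value E Reg f Plo Phi d + e"
proof -
  let ?X = "{(\<Sum>i\<in>UNIV. f i (pg i)) | pg fl. opf_feasible E Reg Plo Phi d pg fl}"
  have "?X \<noteq> {}" using assms(1) by blast
  moreover have "Inf ?X < Inf ?X + e" using assms by simp
  ultimately obtain x where xX: "x \<in> ?X" and "x < Inf ?X + e" by (rule cInf_lessD[elim_format]) blast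
  moreover obtain pg fl where "x = (\<Sum>i\<in>UNIV. f i (pg i))" "opf_feasible E Reg Plo Phi d pg fl" using xX by blast
  ultimately show ?thesis unfolding opf_value_def by blast
qed

lemma dirderiv:
  fixes F :: "real ^ 'n \<Rightarrow> real"
  assumes "(F has_derivative L) (at 0)"
  shows "((\<lambda>t. (F (t *\<^sub>R h) - F 0) / t) \<longlongrightarrow> L h) (at_right 0)"
proof -
  have bl: "bounded_linear L" using assms by (rule has_derivative_bounded_linear)
  have d1: "((\<lambda>t::real. t *\<^sub>R h) has_derivative (\<lambda>t. t *\<^sub>R h)) (at 0)"
    by (auto intro!: derivative_eq_intros)
  have "((\<lambda>t. F (t *\<^sub>R h)) has_derivative (\<lambda>t. L (t *\<^sub>R h))) (at 0)"
    using has_derivative_compose[OF d1] assms by simp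
  moreover have eq: "(\<lambda>t. L (t *\<^sub>R h)) = (*) (L h)"
    by (rule ext) (simp add: linear_scale[OF bounded_linear.linear[OF bl]])
  ultimately have "((\<lambda>t. F (t *\<^sub>R h)) has_field_derivative L h) (at 0)"
    unfolding has_field_derivative_def by simp
  then have "((\<lambda>t. (F (t *\<^sub>R h) - F (0 *\<^sub>R h)) / (t - 0)) \<longlongrightarrow> L h) (at 0)"
    unfolding has_field_derivative_iff by simp
  then have "((\<lambda>t. (F (t *\<^sub>R h) - F 0) / t) \<longlongrightarrow> L h) (at 0)" by simp
  then show ?thesis using filterlim_at_split by blast
qed

lemma cc3:
  fixes a x y z t :: real
  assumes "0 \<le> t" "t \<le> 1" "a \<le> x" "a \<le> y" "a \<le> z"
  shows "a \<le> (1/2) * ((1 - t) * x + t * y) + (1/2) * z"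
proof -
  have "a = (1/2) * ((1 - t) * a + t * a) + (1/2) * a" by (simp add: algebra_simps)
  also have "\<dots> \<le> (1/2) * ((1 - t) * x + t * y) + (1/2) * z"
    using assms by (intro add_mono mult_left_mono) auto
  finally show ?thesis .
qed

lemma cc3':
  fixes a x y z t :: real
  assumes "0 \<le> t" "t \<le> 1" "x \<le> a" "y \<le> a" "z \<le> a"
  shows "(1/2) * ((1 - t) * x + t * y) + (1/2) * z \<le> a"
proof -
  have "(1/2) * ((1 - t) * x + t * y) + (1/2) * z \<le> (1/2) * ((1 - t) * a + t * a) + (1/2) * a"
    using assms by (intro add_mono mult_left_mono) auto
  also have "\<dots> = a" by (simp add: algebra_simps)
  finally show ?thesis .
qed

lemma dominate:
  fixes E :: "('v::finite \<times> 'v) set" and Vb :: "'v \<Rightarrow> real" and g b tlo thi :: "'v \<times> 'v \<Rightarrow> real"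
    and Plo Phi pd pg0 pg1 :: "'v \<Rightarrow> real" and fl0 fl1 :: "'v \<Rightarrow> 'v \<Rightarrow> real"
  assumes tree: "is_tree E" and Vpos: "\<forall>i. Vb i > 0" and gb: "\<forall>e\<in>E. g e \<ge> 0 \<and> b e \<ge> 0"
    and angles: "\<forall>e\<in>E. - angle_bound (g e) (b e) < tlo e \<and> tlo e \<le> thi e \<and> thi e < angle_bound (g e) (b e)"
    and orig: "opf_feasible E (flow_set Vb g b tlo thi) Plo Phi pd pg0 fl0"
    and box1: "\<forall>i. Plo i \<le> pg1 i \<and> pg1 i \<le> Phi i"
    and reg1: "\<forall>(i, k)\<in>E. (fl1 i k, fl1 k i) \<in> convex hull (flow_set Vb g b tlo thi (i, k))"
    and bal1: "\<forall>i. (\<Sum>k\<in>nbrs E i. fl1 i k) \<le> pg1 i - pd i"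
  shows "\<exists>pg fl. opf_feasible E (flow_set Vb g b tlo thi) Plo Phi pd pg fl \<and> (\<forall>i. pg i \<le> pg1 i)"
proof -
  define a where "a = (\<lambda>e. P_ik (Vb (fst e)) (Vb (snd e)) (g e) (b e))"
  define c where "c = (\<lambda>e. P_ki (Vb (fst e)) (Vb (snd e)) (g e) (b e))"
  have simpE: "simple_edges E" and ncE: "\<not> has_cycle E" using tree unfolding is_tree_def by auto
  have asym: "\<And>i k. (i, k) \<in> E \<Longrightarrow> (k, i) \<notin> E" using simpE unfolding simple_edges_def by blast
  have FS: "\<And>i k. flow_set Vb g b tlo thi (i, k) = (\<lambda>\<theta>. (a (i, k) \<theta>, c (i, k) \<theta>)) ` {tlo (i, k)..thi (i, k)}"
    unfolding flow_set_def a_def c_def by simp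
  have reg: "\<forall>e\<in>E. tlo e \<le> thi e \<and> continuous_on {tlo e..thi e} (a e) \<and> continuous_on {tlo e..thi e} (c e) \<and>
                 (\<forall>s t. tlo e \<le> s \<longrightarrow> s \<le> t \<longrightarrow> t \<le> thi e \<longrightarrow> a e s \<le> a e t \<and> c e t \<le> c e s)"
  proof
    fix e assume eE: "e \<in> E"
    have ang: "- angle_bound (g e) (b e) < tlo e" "tlo e \<le> thi e" "thi e < angle_bound (g e) (b e)"
      using angles eE by auto
    have gbe: "g e \<ge> 0" "b e \<ge> 0" using gb eE by auto
    have "continuous_on {tlo e..thi e} (a e)" unfolding a_def P_ik_def[abs_def] by (intro continuous_intros)
    moreover have "continuous_on {tlo e..thi e} (c e)" unfolding c_def P_ki_def[abs_def] by (intro continuous_intros)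
    moreover have "\<forall>s t. tlo e \<le> s \<longrightarrow> s \<le> t \<longrightarrow> t \<le> thi e \<longrightarrow> a e s \<le> a e t \<and> c e t \<le> c e s"
      unfolding a_def c_def using P_mono[OF Vpos[rule_format] Vpos[rule_format] gbe ang(1) ang(3)] by blast
    ultimately show "tlo e \<le> thi e \<and> continuous_on {tlo e..thi e} (a e) \<and> continuous_on {tlo e..thi e} (c e) \<and>
                 (\<forall>s t. tlo e \<le> s \<longrightarrow> s \<le> t \<longrightarrow> t \<le> thi e \<longrightarrow> a e s \<le> a e t \<and> c e t \<le> c e s)"
      using ang by blast
  qed
  have ex0: "\<forall>e\<in>E. \<exists>\<theta>. \<theta> \<in> {tlo e..thi e} \<and> fl0 (fst e) (snd e) = a e \<theta> \<and> fl0 (snd e) (fst e) = c e \<theta>"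
  proof
    fix e assume eE: "e \<in> E"
    obtain i k where e: "e = (i, k)" by (cases e)
    have "(fl0 i k, fl0 k i) \<in> flow_set Vb g b tlo thi (i, k)"
      using orig eE e unfolding opf_feasible_def by auto
    then show "\<exists>\<theta>. \<theta> \<in> {tlo e..thi e} \<and> fl0 (fst e) (snd e) = a e \<theta> \<and> fl0 (snd e) (fst e) = c e \<theta>"
      unfolding FS e by auto
  qed
  then obtain \<theta>0 where th0: "\<forall>e\<in>E. \<theta>0 e \<in> {tlo e..thi e} \<and> fl0 (fst e) (snd e) = a e (\<theta>0 e) \<and> fl0 (snd e) (fst e) = c e (\<theta>0 e)"
    by metis
  have ex1: "\<forall>e\<in>E. \<exists>\<theta>. \<theta> \<in> {tlo e..thi e} \<and> a e \<theta> \<le> fl1 (fst e) (snd e) \<and> c e \<theta> \<le> fl1 (snd e) (fst e)"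
  proof
    fix e assume eE: "e \<in> E"
    obtain i k where e: "e = (i, k)" by (cases e)
    have z: "(fl1 i k, fl1 k i) \<in> convex hull ((\<lambda>\<theta>. (P_ik (Vb i) (Vb k) (g e) (b e) \<theta>, P_ki (Vb i) (Vb k) (g e) (b e) \<theta>)) ` {tlo e..thi e})"
      using reg1 eE e unfolding flow_set_def by auto
    have ang: "- angle_bound (g e) (b e) < tlo e" "thi e < angle_bound (g e) (b e)"
      using angles eE by auto
    have gbe: "g e \<ge> 0" "b e \<ge> 0" using gb eE by auto
    show "\<exists>\<theta>. \<theta> \<in> {tlo e..thi e} \<and> a e \<theta> \<le> fl1 (fst e) (snd e) \<and> c e \<theta> \<le> fl1 (snd e) (fst e)"
      using hull_dom[OF Vpos[rule_format] Vpos[rule_format] gbe ang z] unfolding a_def c_def e by auto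
  qed
  then obtain \<theta>1 where th1: "\<forall>e\<in>E. \<theta>1 e \<in> {tlo e..thi e} \<and> a e (\<theta>1 e) \<le> fl1 (fst e) (snd e) \<and> c e (\<theta>1 e) \<le> fl1 (snd e) (fst e)"
    by metis
  define T where "T = (\<lambda>\<theta> x k. if (x, k) \<in> E then a (x, k) (\<theta> (x, k)) else c (k, x) (\<theta> (k, x)))"
  have injT: "injx E a c \<theta> x = (\<Sum>k\<in>nbrs E x. T \<theta> x k)" for \<theta> x unfolding injx_def T_def by simp
  have T0: "T \<theta>0 x k = fl0 x k" if "k \<in> nbrs E x" for x k
  proof (cases "(x, k) \<in> E")
    case True then show ?thesis using th0 unfolding T_def by auto
  next
    case False
    then have "(k, x) \<in> E" using that unfolding nbrs_def adj_def by auto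
    then show ?thesis using th0 False unfolding T_def by auto
  qed
  have T1: "T \<theta>1 x k \<le> fl1 x k" if "k \<in> nbrs E x" for x k
  proof (cases "(x, k) \<in> E")
    case True then show ?thesis using th1 unfolding T_def by auto
  next
    case False
    then have "(k, x) \<in> E" using that unfolding nbrs_def adj_def by auto
    then show ?thesis using th1 False unfolding T_def by auto
  qed
  define lo where "lo = (\<lambda>x. Plo x - pd x)"
  define up where "up = (\<lambda>x. pg1 x - pd x)"
  have i0: "\<forall>x. lo x \<le> injx E a c \<theta>0 x"
  proof
    fix x
    have "injx E a c \<theta>0 x = (\<Sum>k\<in>nbrs E x. fl0 x k)" unfolding injT using T0 by (intro sum.cong) auto
    also have "\<dots> = pg0 x - pd x" using orig unfolding opf_feasible_def by auto
    moreover have "Plo x \<le> pg0 x" using orig unfolding opf_feasible_def by blast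
    ultimately show "lo x \<le> injx E a c \<theta>0 x" unfolding lo_def by linarith
  qed
  have i1: "\<forall>x. injx E a c \<theta>1 x \<le> up x"
  proof
    fix x
    have "injx E a c \<theta>1 x \<le> (\<Sum>k\<in>nbrs E x. fl1 x k)" unfolding injT using T1 by (intro sum_mono) auto
    then show "injx E a c \<theta>1 x \<le> up x" using bal1 unfolding up_def by (meson order_trans)
  qed
  have lu: "\<forall>x. lo x \<le> up x" using box1 unfolding lo_def up_def by auto
  have th0r: "\<forall>e\<in>E. \<theta>0 e \<in> {tlo e..thi e}" and th1r: "\<forall>e\<in>E. \<theta>1 e \<in> {tlo e..thi e}"
    using th0 th1 by auto
  obtain \<theta> where thr: "\<forall>e\<in>E. \<theta> e \<in> {tlo e..thi e}"
    and ok: "\<forall>x. lo x \<le> injx E a c \<theta> x \<and> injx E a c \<theta> x \<le> up x"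
    using dom_lemma[OF simpE ncE reg th1r th0r i1 i0 lu] by blast
  define pg where "pg = (\<lambda>x. pd x + injx E a c \<theta> x)"
  define fl where "fl = T \<theta>"
  have "opf_feasible E (flow_set Vb g b tlo thi) Plo Phi pd pg fl"
    unfolding opf_feasible_def
  proof (intro conjI allI ballI)
    fix x
    show "Plo x \<le> pg x" using ok unfolding pg_def lo_def by (metis add.commute diff_le_eq)
    show "pg x \<le> Phi x" using ok box1 unfolding pg_def up_def by (smt (verit))
    show "pg x - pd x = (\<Sum>k\<in>nbrs E x. fl x k)" unfolding pg_def fl_def injT by simp
  next
    fix e assume eE: "e \<in> E"
    obtain i k where e: "e = (i, k)" by (cases e)
    have "(i, k) \<in> E" "(k, i) \<notin> E" using eE e asym by auto
    then have "(fl i k, fl k i) = (a (i, k) (\<theta> (i, k)), c (i, k) (\<theta> (i, k)))" unfolding fl_def T_def by auto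
    then have "(fl i k, fl k i) \<in> flow_set Vb g b tlo thi (i, k)" unfolding FS using thr eE e by auto
    then show "case e of (i, k) \<Rightarrow> (fl i k, fl k i) \<in> flow_set Vb g b tlo thi (i, k)" using e by simp
  qed
  moreover have "\<forall>x. pg x \<le> pg1 x" using ok unfolding pg_def up_def by (smt (verit))
  ultimately show ?thesis by blast
qed

lemma mix:
  fixes Reg :: "'v::finite \<times> 'v \<Rightarrow> (real \<times> real) set"
  assumes cR: "\<forall>e. convex (Reg e)" and t: "0 \<le> t" "t \<le> 1"
    and S1: "opf_feasible E Reg Plo Phi d1 p1 f1"
    and S2: "opf_feasible E Reg Plo Phi d2 p2 f2"
    and S3: "opf_feasible E Reg Plo Phi d3 p3 f3"
  shows "opf_feasible E Reg Plo Phi (\<lambda>i. (1/2) * ((1 - t) * d1 i + t * d2 i) + (1/2) * d3 i)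
           (\<lambda>i. (1/2) * ((1 - t) * p1 i + t * p2 i) + (1/2) * p3 i)
           (\<lambda>i k. (1/2) * ((1 - t) * f1 i k + t * f2 i k) + (1/2) * f3 i k)"
  unfolding opf_feasible_def
proof (intro conjI allI ballI)
  fix i
  have b1: "Plo i \<le> p1 i" "p1 i \<le> Phi i" using S1 unfolding opf_feasible_def by auto
  have b2: "Plo i \<le> p2 i" "p2 i \<le> Phi i" using S2 unfolding opf_feasible_def by auto
  have b3: "Plo i \<le> p3 i" "p3 i \<le> Phi i" using S3 unfolding opf_feasible_def by auto
  show "Plo i \<le> (1/2) * ((1 - t) * p1 i + t * p2 i) + (1/2) * p3 i" using cc3[OF t b1(1) b2(1) b3(1)] .
  show "(1/2) * ((1 - t) * p1 i + t * p2 i) + (1/2) * p3 i \<le> Phi i" using cc3'[OF t b1(2) b2(2) b3(2)] .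
  have q1: "p1 i - d1 i = (\<Sum>k\<in>nbrs E i. f1 i k)" using S1 unfolding opf_feasible_def by auto
  have q2: "p2 i - d2 i = (\<Sum>k\<in>nbrs E i. f2 i k)" using S2 unfolding opf_feasible_def by auto
  have q3: "p3 i - d3 i = (\<Sum>k\<in>nbrs E i. f3 i k)" using S3 unfolding opf_feasible_def by auto
  have "(\<Sum>k\<in>nbrs E i. (1/2) * ((1 - t) * f1 i k + t * f2 i k) + (1/2) * f3 i k)
      = (1/2) * ((1 - t) * (\<Sum>k\<in>nbrs E i. f1 i k) + t * (\<Sum>k\<in>nbrs E i. f2 i k)) + (1/2) * (\<Sum>k\<in>nbrs E i. f3 i k)"
    by (simp only: sum.distrib sum_distrib_left[symmetric])
  also have "\<dots> = (1/2) * ((1 - t) * (p1 i - d1 i) + t * (p2 i - d2 i)) + (1/2) * (p3 i - d3 i)"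
    using q1 q2 q3 by simp
  finally have eq: "(\<Sum>k\<in>nbrs E i. (1/2) * ((1 - t) * f1 i k + t * f2 i k) + (1/2) * f3 i k)
     = (1/2) * ((1 - t) * (p1 i - d1 i) + t * (p2 i - d2 i)) + (1/2) * (p3 i - d3 i)" .
  show "(1/2) * ((1 - t) * p1 i + t * p2 i) + (1/2) * p3 i - ((1/2) * ((1 - t) * d1 i + t * d2 i) + (1/2) * d3 i)
      = (\<Sum>k\<in>nbrs E i. (1/2) * ((1 - t) * f1 i k + t * f2 i k) + (1/2) * f3 i k)"
    unfolding eq by (simp add: field_simps)
next
  fix e assume eE: "e \<in> E"
  obtain i k where e: "e = (i, k)" by (cases e)
  have z1: "(f1 i k, f1 k i) \<in> Reg (i, k)" using S1 eE e unfolding opf_feasible_def by auto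
  have z2: "(f2 i k, f2 k i) \<in> Reg (i, k)" using S2 eE e unfolding opf_feasible_def by auto
  have z3: "(f3 i k, f3 k i) \<in> Reg (i, k)" using S3 eE e unfolding opf_feasible_def by auto
  have "(1 - t) *\<^sub>R (f1 i k, f1 k i) + t *\<^sub>R (f2 i k, f2 k i) \<in> Reg (i, k)"
    using convexD[OF cR[rule_format] z1 z2, of "1 - t" t] t by auto
  then have "(1/2) *\<^sub>R ((1 - t) *\<^sub>R (f1 i k, f1 k i) + t *\<^sub>R (f2 i k, f2 k i)) + (1/2) *\<^sub>R (f3 i k, f3 k i) \<in> Reg (i, k)"
    using convexD[OF cR[rule_format] _ z3, of _ "1/2" "1/2"] by auto
  then show "case e of (i, k) \<Rightarrow> ((1/2) * ((1 - t) * f1 i k + t * f2 i k) + (1/2) * f3 i k,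
                                    (1/2) * ((1 - t) * f1 k i + t * f2 k i) + (1/2) * f3 k i) \<in> Reg (i, k)"
    using e by simp
qed

lemma mix_cost:
  fixes f :: "'v::finite \<Rightarrow> real \<Rightarrow> real"
  assumes cf: "\<forall>i. convex_on UNIV (f i)" and t: "0 \<le> t" "t \<le> 1"
  shows "(\<Sum>i\<in>UNIV. f i ((1/2) * ((1 - t) * p1 i + t * p2 i) + (1/2) * p3 i))
     \<le> (1/2) * ((1 - t) * (\<Sum>i\<in>UNIV. f i (p1 i)) + t * (\<Sum>i\<in>UNIV. f i (p2 i))) + (1/2) * (\<Sum>i\<in>UNIV. f i (p3 i))"
proof -
  have "f i ((1/2) * ((1 - t) * p1 i + t * p2 i) + (1/2) * p3 i)
     \<le> (1/2) * ((1 - t) * f i (p1 i) + t * f i (p2 i)) + (1/2) * f i (p3 i)" for i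
  proof -
    have c1: "f i ((1 - t) * p1 i + t * p2 i) \<le> (1 - t) * f i (p1 i) + t * f i (p2 i)"
      using convex_onD[OF cf[rule_format] t, of "p1 i" "p2 i"] unfolding real_scaleR_def by simp
    have h: "(1::real) - 1/2 = 1/2" by simp
    have c2: "f i ((1/2) * ((1 - t) * p1 i + t * p2 i) + (1/2) * p3 i)
        \<le> (1/2) * f i ((1 - t) * p1 i + t * p2 i) + (1/2) * f i (p3 i)"
      using convex_onD[OF cf[rule_format], of "1/2" "(1 - t) * p1 i + t * p2 i" "p3 i"] unfolding h real_scaleR_def by simp
    have "(1/2) * f i ((1 - t) * p1 i + t * p2 i) \<le> (1/2) * ((1 - t) * f i (p1 i) + t * f i (p2 i))"
      using c1 by (rule mult_left_mono) simp
    then show ?thesis using c2 by (rule order_trans[OF _ add_right_mono, rotated])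
  qed
  then have "(\<Sum>i\<in>UNIV. f i ((1/2) * ((1 - t) * p1 i + t * p2 i) + (1/2) * p3 i))
     \<le> (\<Sum>i\<in>UNIV. (1/2) * ((1 - t) * f i (p1 i) + t * f i (p2 i)) + (1/2) * f i (p3 i))"
    by (intro sum_mono) auto
  also have "\<dots> = (1/2) * ((1 - t) * (\<Sum>i\<in>UNIV. f i (p1 i)) + t * (\<Sum>i\<in>UNIV. f i (p2 i))) + (1/2) * (\<Sum>i\<in>UNIV. f i (p3 i))"
    by (simp only: sum.distrib sum_distrib_left[symmetric])
  finally show ?thesis .
qed

lemma axis_sum: "(\<Sum>j\<in>UNIV. lam j * (axis i (c::real) :: real ^ 'v::finite) $ j) = lam i * c"
  unfolding axis_def by (simp add: if_distrib cong: if_cong)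

theorem theorem2:
  fixes E :: "('v::finite \<times> 'v) set"
    and Vb :: "'v \<Rightarrow> real"
    and g b tlo thi :: "'v \<times> 'v \<Rightarrow> real"
    and f :: "'v \<Rightarrow> real \<Rightarrow> real"
    and Plo Phi pd :: "'v \<Rightarrow> real"
    and lam :: "'v \<Rightarrow> real"
  assumes tree: "is_tree E"
    and Vpos: "\<forall>i. Vb i > 0"
    and gb_nonneg: "\<forall>e\<in>E. g e \<ge> 0 \<and> b e \<ge> 0"
    and angles: "\<forall>e\<in>E. - angle_bound (g e) (b e) < tlo e \<and> tlo e \<le> thi e
                        \<and> thi e < angle_bound (g e) (b e)"
    and angle_ranges: "\<forall>e\<in>E. - pi \<le> tlo e \<and> tlo e \<le> 0 \<and> 0 \<le> thi e \<and> thi e \<le> pi"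
    and f_mono: "\<forall>i. mono (f i)"
    and f_convex: "\<forall>i. convex_on UNIV (f i)"
    and feasible_near0: "\<exists>r>0. \<forall>\<epsilon>::real^'v. norm \<epsilon> < r \<longrightarrow>
          (\<exists>pg fl. opf_feasible E (flow_set Vb g b tlo thi) Plo Phi (\<lambda>i. pd i + \<epsilon> $ i) pg fl)"
    and LMP: "((\<lambda>\<epsilon>::real^'v. opf_value E (flow_set Vb g b tlo thi) f Plo Phi (\<lambda>i. pd i + \<epsilon> $ i))
                has_derivative (\<lambda>\<epsilon>. \<Sum>i\<in>UNIV. lam i * \<epsilon> $ i)) (at 0)"
  shows "balance_multiplier E (\<lambda>e. convex hull (flow_set Vb g b tlo thi e)) f Plo Phi pd lam
       \<and> (\<forall>\<mu>. balance_multiplier E (\<lambda>e. convex hull (flow_set Vb g b tlo thi e)) f Plo Phi pd \<mu>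
              \<longrightarrow> \<mu> = lam)
       \<and> (\<forall>i. lam i \<ge> 0)"
proof -
  define FS where "FS = flow_set Vb g b tlo thi"
  define CH where "CH = (\<lambda>e. convex hull (FS e))"
  define F where "F = (\<lambda>\<epsilon>::real^'v. opf_value E FS f Plo Phi (\<lambda>i. pd i + \<epsilon> $ i))"
  define L where "L = (\<lambda>\<epsilon>::real^'v. \<Sum>i\<in>UNIV. lam i * \<epsilon> $ i)"
  define cost where "cost = (\<lambda>pg. \<Sum>i\<in>UNIV. f i (pg i))"
  have Fd: "(F has_derivative L) (at 0)" using LMP unfolding F_def L_def FS_def .
  obtain r where r: "r > 0" and rfe: "\<And>\<epsilon>::real^'v. norm \<epsilon> < r \<Longrightarrow>
          (\<exists>pg fl. opf_feasible E FS Plo Phi (\<lambda>i. pd i + \<epsilon> $ i) pg fl)"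
    using feasible_near0 unfolding FS_def by blast
  have pd0: "(\<lambda>i. pd i + (0::real^'v) $ i) = pd" by auto
  have F0: "F 0 = opf_value E FS f Plo Phi pd" unfolding F_def pd0 ..
  obtain pg0 fl0 where orig0: "opf_feasible E FS Plo Phi pd pg0 fl0" using rfe[of 0] r pd0 by auto
  have orig_ch: "opf_feasible E CH Plo Phi d pg fl" if "opf_feasible E FS Plo Phi d pg fl" for d pg fl
    using that hull_subset unfolding opf_feasible_def CH_def by fast
  have costmono: "cost pg \<le> cost pg'" if "\<forall>i. pg i \<le> pg' i" for pg pg'
    unfolding cost_def using that f_mono by (intro sum_mono) (auto simp: monoD)
  have dom: "\<exists>pg fl. opf_feasible E FS Plo Phi pd pg fl \<and> (\<forall>i. pg i \<le> pg1 i)"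
    if "\<forall>i. Plo i \<le> pg1 i \<and> pg1 i \<le> Phi i" "\<forall>(i, k)\<in>E. (fl1 i k, fl1 k i) \<in> CH (i, k)"
       "\<forall>i. (\<Sum>k\<in>nbrs E i. fl1 i k) \<le> pg1 i - pd i" for pg1 fl1
    using dominate[OF tree Vpos gb_nonneg angles orig0[unfolded FS_def] that(1) that(2)[unfolded CH_def FS_def] that(3)]
    unfolding FS_def by blast
  have exact: "opf_value E CH f Plo Phi pd = F 0"
  proof (rule antisym)
    show "opf_value E CH f Plo Phi pd \<le> F 0" unfolding F0
      by (rule ov_greatest[OF orig0]) (rule ov_lower[OF f_mono orig_ch])
    show "F 0 \<le> opf_value E CH f Plo Phi pd"
    proof (rule ov_greatest[OF orig_ch[OF orig0]])
      fix pg1 fl1 assume fe1: "opf_feasible E CH Plo Phi pd pg1 fl1"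
      then obtain pg fl where fe: "opf_feasible E FS Plo Phi pd pg fl" and le: "\<forall>i. pg i \<le> pg1 i"
        using dom[of pg1 fl1] unfolding opf_feasible_def by auto
      have "F 0 \<le> cost pg" unfolding F0 cost_def by (rule ov_lower[OF f_mono fe])
      also have "\<dots> \<le> cost pg1" using costmono le by blast
      finally show "F 0 \<le> (\<Sum>i\<in>UNIV. f i (pg1 i))" unfolding cost_def .
    qed
  qed
  have small: "eventually (\<lambda>t. norm (t *\<^sub>R h) < r \<and> t < 1) (at_right (0::real))" for h :: "real^'v"
  proof -
    define B where "B = min 1 (r / (norm h + 1))"
    have np: "norm h + 1 > 0" by (simp add: add_nonneg_pos)
    have Bp: "B > 0" unfolding B_def using r np by (simp add: divide_pos_pos)
    have "norm (y *\<^sub>R h) < r \<and> y < 1" if "0 < y" "y < B" for y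
    proof -
      have "norm (y *\<^sub>R h) = y * norm h" using that by simp
      also have "\<dots> \<le> y * (norm h + 1)" using that by (intro mult_left_mono) auto
      also have "\<dots> < B * (norm h + 1)" using that by (intro mult_strict_right_mono) (use np in auto)
      also have "\<dots> \<le> r / (norm h + 1) * (norm h + 1)" unfolding B_def
        by (intro mult_right_mono) (use np in auto)
      also have "\<dots> = r" using np by simp
      finally show ?thesis using that B_def by auto
    qed
    then show ?thesis unfolding eventually_at_right_field using Bp by blast
  qed
  have lowlim: "c \<le> L h" if ev: "eventually (\<lambda>t. c \<le> (F (t *\<^sub>R h) - F 0) / t) (at_right (0::real))" for c h
    using tendsto_lowerbound[OF dirderiv[OF Fd, of h] ev] trivial_limit_at_right_real by blast
  have feas_t: "\<exists>pg fl. opf_feasible E FS Plo Phi (\<lambda>i. pd i + t * h $ i) pg fl"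
    if "norm (t *\<^sub>R h) < r" for t h
    using rfe[OF that] by simp
  have Fth: "F (t *\<^sub>R h) = opf_value E FS f Plo Phi (\<lambda>i. pd i + t * h $ i)" for t h
    unfolding F_def by simp
  have nonneg: "lam i \<ge> 0" for i
  proof -
    define h where "h = (axis i (1::real) :: real^'v)"
    have hnn: "\<And>j. h $ j \<ge> 0" unfolding h_def axis_def by auto
    have "eventually (\<lambda>t. 0 \<le> (F (t *\<^sub>R h) - F 0) / t) (at_right (0::real))"
    proof -
      have "eventually (\<lambda>t. (norm (t *\<^sub>R h) < r \<and> t < 1) \<and> t > 0) (at_right (0::real))"
        using small[of h] eventually_at_right_less by (rule eventually_conj)
      then show ?thesis
      proof (rule eventually_mono)
        fix t :: real assume t: "(norm (t *\<^sub>R h) < r \<and> t < 1) \<and> t > 0"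
        obtain pgx flx where fx: "opf_feasible E FS Plo Phi (\<lambda>j. pd j + t * h $ j) pgx flx"
          using feas_t t by blast
        have "F 0 \<le> F (t *\<^sub>R h)" unfolding Fth
        proof (rule ov_greatest[OF fx])
          fix pg1 fl1 assume fe1: "opf_feasible E FS Plo Phi (\<lambda>j. pd j + t * h $ j) pg1 fl1"
          have c1: "opf_feasible E CH Plo Phi (\<lambda>j. pd j + t * h $ j) pg1 fl1" by (rule orig_ch[OF fe1])
          have "\<forall>j. (\<Sum>k\<in>nbrs E j. fl1 j k) \<le> pg1 j - pd j"
          proof
            fix j
            have "pg1 j - (pd j + t * h $ j) = (\<Sum>k\<in>nbrs E j. fl1 j k)" using fe1 unfolding opf_feasible_def by auto
            moreover have "t * h $ j \<ge> 0" using t hnn by simp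
            ultimately show "(\<Sum>k\<in>nbrs E j. fl1 j k) \<le> pg1 j - pd j" by linarith
          qed
          then obtain pg fl where fe: "opf_feasible E FS Plo Phi pd pg fl" and le: "\<forall>i. pg i \<le> pg1 i"
            using dom[of pg1 fl1] c1 unfolding opf_feasible_def by auto
          have "F 0 \<le> cost pg" unfolding F0 cost_def by (rule ov_lower[OF f_mono fe])
          also have "\<dots> \<le> cost pg1" using costmono le by blast
          finally show "F 0 \<le> (\<Sum>i\<in>UNIV. f i (pg1 i))" unfolding cost_def .
        qed
        then show "0 \<le> (F (t *\<^sub>R h) - F 0) / t" using t by simp
      qed
    qed
    then have "0 \<le> L h" by (rule lowlim)
    then show ?thesis unfolding L_def h_def axis_sum by simp
  qed
  have uniq: "\<mu> = lam" if mu: "balance_multiplier E CH f Plo Phi pd \<mu>" for \<mu>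
  proof -
    have le: "(\<Sum>j\<in>UNIV. \<mu> j * h $ j) \<le> L h" for h :: "real^'v"
    proof -
      have "eventually (\<lambda>t. (\<Sum>j\<in>UNIV. \<mu> j * h $ j) \<le> (F (t *\<^sub>R h) - F 0) / t) (at_right (0::real))"
      proof -
        have "eventually (\<lambda>t. (norm (t *\<^sub>R h) < r \<and> t < 1) \<and> t > 0) (at_right (0::real))"
          using small[of h] eventually_at_right_less by (rule eventually_conj)
        then show ?thesis
        proof (rule eventually_mono)
          fix t :: real assume t: "(norm (t *\<^sub>R h) < r \<and> t < 1) \<and> t > 0"
          obtain pgx flx where fx: "opf_feasible E FS Plo Phi (\<lambda>j. pd j + t * h $ j) pgx flx"
            using feas_t t by blast
          have "F 0 + t * (\<Sum>j\<in>UNIV. \<mu> j * h $ j) \<le> F (t *\<^sub>R h)" unfolding Fth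
          proof (rule ov_greatest[OF fx])
            fix pg1 fl1 assume fe1: "opf_feasible E FS Plo Phi (\<lambda>j. pd j + t * h $ j) pg1 fl1"
            have c1: "opf_feasible E CH Plo Phi (\<lambda>j. pd j + t * h $ j) pg1 fl1" by (rule orig_ch[OF fe1])
            have bx: "\<forall>i. Plo i \<le> pg1 i \<and> pg1 i \<le> Phi i" and rg: "\<forall>(i, k)\<in>E. (fl1 i k, fl1 k i) \<in> CH (i, k)"
              using c1 unfolding opf_feasible_def by auto
            have "opf_value E CH f Plo Phi pd \<le> (\<Sum>i\<in>UNIV. f i (pg1 i))
                   - (\<Sum>i\<in>UNIV. \<mu> i * (pg1 i - pd i - (\<Sum>k\<in>nbrs E i. fl1 i k)))"
              using mu bx rg unfolding balance_multiplier_def by blast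
            moreover have "\<And>i. pg1 i - pd i - (\<Sum>k\<in>nbrs E i. fl1 i k) = t * h $ i"
              using fe1 unfolding opf_feasible_def by (auto simp: algebra_simps)
            moreover have "(\<Sum>i\<in>UNIV. \<mu> i * (t * h $ i)) = t * (\<Sum>j\<in>UNIV. \<mu> j * h $ j)"
              by (simp add: sum_distrib_left algebra_simps)
            ultimately show "F 0 + t * (\<Sum>j\<in>UNIV. \<mu> j * h $ j) \<le> (\<Sum>i\<in>UNIV. f i (pg1 i))"
              using exact by simp
          qed
          then show "(\<Sum>j\<in>UNIV. \<mu> j * h $ j) \<le> (F (t *\<^sub>R h) - F 0) / t"
            using t by (simp add: pos_le_divide_eq algebra_simps)
        qed
      qed
      then show ?thesis by (rule lowlim)
    qed
    show "\<mu> = lam"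
    proof
      fix i
      have "\<mu> i * 1 \<le> lam i * 1" using le[of "axis i 1"] unfolding L_def axis_sum .
      moreover have "\<mu> i * (-1) \<le> lam i * (-1)" using le[of "axis i (-1)"] unfolding L_def axis_sum .
      ultimately show "\<mu> i = lam i" by simp
    qed
  qed
  have mult: "balance_multiplier E CH f Plo Phi pd lam"
    unfolding balance_multiplier_def
  proof (intro allI impI)
    fix pg fl
    assume H: "(\<forall>i. Plo i \<le> pg i \<and> pg i \<le> Phi i) \<and> (\<forall>(i, k)\<in>E. (fl i k, fl k i) \<in> CH (i, k))"
    define \<delta> where "\<delta> = (\<lambda>i. pg i - pd i - (\<Sum>k\<in>nbrs E i. fl i k))"
    define dS where "dS = (\<lambda>i. pg i - (\<Sum>k\<in>nbrs E i. fl i k))"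
    have feS: "opf_feasible E CH Plo Phi dS pg fl" using H unfolding opf_feasible_def dS_def by auto
    define h :: "real^'v" where "h = (\<chi> i. - \<delta> i)"
    define W where "W = F 0"
    define c where "c = cost pg"
    have cR: "\<forall>e. convex (CH e)" unfolding CH_def by simp
    have "eventually (\<lambda>t. W - c \<le> (F (t *\<^sub>R h) - F 0) / t) (at_right (0::real))"
    proof -
      have "eventually (\<lambda>t. (norm (t *\<^sub>R h) < r \<and> t < 1) \<and> t > 0) (at_right (0::real))"
        using small[of h] eventually_at_right_less by (rule eventually_conj)
      then show ?thesis
      proof (rule eventually_mono)
        fix t :: real assume t: "(norm (t *\<^sub>R h) < r \<and> t < 1) \<and> t > 0"
        define dm where "dm = (\<lambda>j. pd j + t * h $ j)"
        obtain pgx flx where fx: "opf_feasible E FS Plo Phi dm pgx flx"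
          using feas_t t unfolding dm_def by blast
        have Fm: "F (t *\<^sub>R h) = opf_value E FS f Plo Phi dm" unfolding Fth dm_def ..
        have key: "W \<le> (1/2) * ((1 - t) * W + t * c) + (1/2) * F (t *\<^sub>R h)"
        proof (rule field_le_epsilon)
          fix \<epsilon> :: real assume ep: "0 < \<epsilon>"
          obtain pga fla where fa: "opf_feasible E CH Plo Phi pd pga fla"
            and ca: "cost pga < opf_value E CH f Plo Phi pd + \<epsilon>"
            using ov_approx[OF orig_ch[OF orig0] ep] unfolding cost_def by blast
          obtain pgm flm where fm: "opf_feasible E FS Plo Phi dm pgm flm"
            and cm: "cost pgm < opf_value E FS f Plo Phi dm + \<epsilon>"
            using ov_approx[OF fx ep] unfolding cost_def by blast
          have t01: "0 \<le> t" "t \<le> 1" using t by auto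
          have fT: "opf_feasible E CH Plo Phi (\<lambda>i. (1/2) * ((1 - t) * pd i + t * dS i) + (1/2) * dm i)
             (\<lambda>i. (1/2) * ((1 - t) * pga i + t * pg i) + (1/2) * pgm i)
             (\<lambda>i k. (1/2) * ((1 - t) * fla i k + t * fl i k) + (1/2) * flm i k)"
            by (rule mix[OF cR t01 fa feS orig_ch[OF fm]])
          have dT: "(\<lambda>i. (1/2) * ((1 - t) * pd i + t * dS i) + (1/2) * dm i) = pd"
            unfolding dS_def dm_def h_def \<delta>_def by (rule ext) (simp add: field_simps)
          have "W \<le> cost (\<lambda>i. (1/2) * ((1 - t) * pga i + t * pg i) + (1/2) * pgm i)"
            using ov_lower[OF f_mono fT[unfolded dT]] exact unfolding W_def cost_def by simp
          also have "\<dots> \<le> (1/2) * ((1 - t) * cost pga + t * cost pg) + (1/2) * cost pgm"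
            unfolding cost_def by (rule mix_cost[OF f_convex t01])
          also have "\<dots> \<le> (1/2) * ((1 - t) * (W + \<epsilon>) + t * c) + (1/2) * (F (t *\<^sub>R h) + \<epsilon>)"
          proof -
            have "(1 - t) * cost pga \<le> (1 - t) * (W + \<epsilon>)"
              using ca exact t01 unfolding W_def by (intro mult_left_mono) auto
            then have a1: "(1 - t) * cost pga + t * cost pg \<le> (1 - t) * (W + \<epsilon>) + t * cost pg" by simp
            have a2: "cost pgm \<le> F (t *\<^sub>R h) + \<epsilon>" using cm Fm by simp
            show ?thesis unfolding c_def by (rule add_mono; rule mult_left_mono) (use a1 a2 in auto)
          qed
          also have "\<dots> \<le> (1/2) * ((1 - t) * W + t * c) + (1/2) * F (t *\<^sub>R h) + \<epsilon>"
          proof -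
            have "0 \<le> t * \<epsilon>" using t01 ep by simp
            moreover have "(1/2) * ((1 - t) * (W + \<epsilon>) + t * c) + (1/2) * (F (t *\<^sub>R h) + \<epsilon>)
               = (1/2) * ((1 - t) * W + t * c) + (1/2) * F (t *\<^sub>R h) + \<epsilon> - (1/2) * (t * \<epsilon>)"
              by (simp add: field_simps)
            ultimately show ?thesis by linarith
          qed
          finally show "W \<le> (1/2) * ((1 - t) * W + t * c) + (1/2) * F (t *\<^sub>R h) + \<epsilon>" .
        qed
        have "t * (W - c) \<le> F (t *\<^sub>R h) - W" using key by (simp add: field_simps)
        then show "W - c \<le> (F (t *\<^sub>R h) - F 0) / t"
          using t unfolding W_def by (simp add: pos_le_divide_eq mult.commute)
      qed
    qed
    then have "W - c \<le> L h" by (rule lowlim)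
    moreover have "L h = - (\<Sum>i\<in>UNIV. lam i * (pg i - pd i - (\<Sum>k\<in>nbrs E i. fl i k)))"
      unfolding L_def h_def \<delta>_def by (simp add: sum_negf[symmetric] algebra_simps)
    ultimately show "opf_value E CH f Plo Phi pd \<le> (\<Sum>i\<in>UNIV. f i (pg i))
        - (\<Sum>i\<in>UNIV. lam i * (pg i - pd i - (\<Sum>k\<in>nbrs E i. fl i k)))"
      using exact unfolding W_def c_def cost_def by linarith
  qed
  show ?thesis using mult uniq nonneg unfolding CH_def FS_def by blast
qed

end
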